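(* Let $X,Y\in M_n$ with entries in $\mathbb R$ or $\mathbb C$. Then $Y$ is a $\circ$-pseudoinverse of $X$ if and only if $\phi(Y)$ is a pseudoinverse of $\phi(X)$ among matrices in $S_{n+1}$; and $Y$ is the $\circ$-Moore–Penrose inverse of $X$ if and only if $\phi(Y)$ satisfies the four Moore–Penrose conditions for $\phi(X)$. In particular, the Moore–Penrose inverse $\phi(X)^+$ of $\phi(X)$ lies in $S_{n+1}$ and equals $\phi(X^\oplus)$, where $X^\oplus$ is the $\circ$-Moore–Penrose inverse of $X$.
   Context: Matrices are over $F=\mathbb R$ or $\mathbb C$; $A^*$ denotes conjugate transpose. $M_n$ is the set of $n\times n$ matrices over $F$; $S_{n}$ is the set of $n\times n$ matrices all of whose row sums and column sums are zero. $\mathbf 1$ is the all-ones column vector, $J_n:=[I_n\mid -\mathbf 1]$ (an $n\times(n+1)$ matrix), $K_n:=J_nJ_n^*$, and $\phi(X):=J_n^*XJ_n$. The twisted product on $M_n$ is $X\circ Y:=XK_nY$. A pseudoinverse of a matrix $A$ is any $B$ with $ABA=A$; the Moore–Penrose inverse $A^+$ is the unique $B$ with $ABA=A$, $BAB=B$, $(AB)^*=AB$, $(BA)^*=BA$. A $\circ$-pseudoinverse of $X\in M_n$ is any $Y\in M_n$ with $X\circ Y\circ X=X$; a $\circ$-Moore–Penrose inverse of $X$ is a $Y\in M_n$ with $X\circ Y\circ X=X$, $Y\circ X\circ Y=Y$, $(X\circ Y)^*=X\circ Y$, $(Y\circ X)^*=Y\circ X$. *)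

theory Defs
  imports "Jordan_Normal_Form.Schur_Decomposition"
begin

text \<open>Matrices are Jordan_Normal_Form matrices over a field with conjugation;
  the theorem is instantiated to real and complex. The conjugate transpose A* is
  mat_adjoint A.\<close>

definition zero_sum_mats :: "nat \<Rightarrow> 'a :: conjugatable_field mat set" where
  "zero_sum_mats n = {A \<in> carrier_mat n n.
      (\<forall>i<n. (\<Sum>j<n. A $$ (i, j)) = 0) \<and> (\<forall>j<n. (\<Sum>i<n. A $$ (i, j)) = 0)}"

definition J_mat :: "nat \<Rightarrow> 'a :: conjugatable_field mat" where
  "J_mat n = mat n (n + 1) (\<lambda>(i, j). if j < n then (if i = j then 1 else 0) else - 1)"

definition K_mat :: "nat \<Rightarrow> 'a :: conjugatable_field mat" where
  "K_mat n = J_mat n * mat_adjoint (J_mat n)"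

definition phi :: "nat \<Rightarrow> 'a :: conjugatable_field mat \<Rightarrow> 'a mat" where
  "phi n X = mat_adjoint (J_mat n) * X * J_mat n"

definition twisted_prod :: "nat \<Rightarrow> 'a :: conjugatable_field mat \<Rightarrow> 'a mat \<Rightarrow> 'a mat" where
  "twisted_prod n X Y = X * K_mat n * Y"

definition is_pinv :: "'a :: conjugatable_field mat \<Rightarrow> 'a mat \<Rightarrow> bool" where
  "is_pinv A B \<longleftrightarrow> B \<in> carrier_mat (dim_col A) (dim_row A) \<and> A * B * A = A"

definition is_MP :: "'a :: conjugatable_field mat \<Rightarrow> 'a mat \<Rightarrow> bool" where
  "is_MP A B \<longleftrightarrow> B \<in> carrier_mat (dim_col A) (dim_row A) \<and> A * B * A = A \<and> B * A * B = B
     \<and> mat_adjoint (A * B) = A * B \<and> mat_adjoint (B * A) = B * A"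

definition MP_inverse :: "'a :: conjugatable_field mat \<Rightarrow> 'a mat" where
  "MP_inverse A = (THE B. is_MP A B)"

definition circ_pinv :: "nat \<Rightarrow> 'a :: conjugatable_field mat \<Rightarrow> 'a mat \<Rightarrow> bool" where
  "circ_pinv n X Y \<longleftrightarrow> Y \<in> carrier_mat n n \<and>
     twisted_prod n (twisted_prod n X Y) X = X"

definition circ_MP :: "nat \<Rightarrow> 'a :: conjugatable_field mat \<Rightarrow> 'a mat \<Rightarrow> bool" where
  "circ_MP n X Y \<longleftrightarrow> Y \<in> carrier_mat n n \<and>
     twisted_prod n (twisted_prod n X Y) X = X \<and>
     twisted_prod n (twisted_prod n Y X) Y = Y \<and>
     mat_adjoint (twisted_prod n X Y) = twisted_prod n X Y \<and>
     mat_adjoint (twisted_prod n Y X) = twisted_prod n Y X"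

definition circ_MP_inverse :: "nat \<Rightarrow> 'a :: conjugatable_field mat \<Rightarrow> 'a mat" where
  "circ_MP_inverse n X = (THE Y. circ_MP n X Y)"

end

theory Submission
  imports Defs
begin


abbreviation adj where "adj \<equiv> mat_adjoint"

lemma adj_dim[simp]: "dim_row (adj A) = dim_col A" "dim_col (adj A) = dim_row A"
  unfolding mat_adjoint_def by auto

lemma adj_index[simp]: "i < dim_col A \<Longrightarrow> j < dim_row A \<Longrightarrow> adj A $$ (i,j) = conjugate (A $$ (j,i))"
  unfolding mat_adjoint_def by (auto simp: mat_of_rows_def)

lemma adj_carrier[simp,intro]: "A \<in> carrier_mat m n \<Longrightarrow> adj A \<in> carrier_mat n m"
  by auto

lemma adj_adj[simp]: "adj (adj (A::'a::conjugatable_field mat)) = A"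
  by (rule eq_matI, auto)

lemma adj_mult: fixes A :: "'a::conjugatable_field mat"
  assumes "dim_col A = dim_row B" shows "adj (A * B) = adj B * adj A"
proof (rule eq_matI)
  fix i j assume "i < dim_row (adj B * adj A)" "j < dim_col (adj B * adj A)"
  hence i: "i < dim_col B" and j: "j < dim_row A" by auto
  have "adj (A * B) $$ (i,j) = conjugate (\<Sum>k\<in>{0..<dim_row B}. A $$ (j,k) * B $$ (k,i))"
    using i j assms by (simp add: scalar_prod_def)
  also have "\<dots> = (\<Sum>k\<in>{0..<dim_row B}. conjugate (A $$ (j,k) * B $$ (k,i)))"
    by (rule sum_conjugate) simp
  also have "\<dots> = (\<Sum>k\<in>{0..<dim_row B}. conjugate (B $$ (k,i)) * conjugate (A $$ (j,k)))"
    by (rule sum.cong[OF refl], subst conjugate_dist_mul, rule mult.commute)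
  also have "\<dots> = (adj B * adj A) $$ (i,j)"
    using i j assms by (simp add: scalar_prod_def)
  finally show "adj (A * B) $$ (i,j) = (adj B * adj A) $$ (i,j)" .
qed auto

lemma adj_zero[simp]: "adj (0\<^sub>m m n :: 'a::conjugatable_field mat) = 0\<^sub>m n m"
  by (rule eq_matI, auto)

lemma conjugate_one[simp]: "conjugate (1::'a::conjugatable_field) = 1"
proof -
  let ?c = "conjugate (1::'a)"
  have "?c * ?c = conjugate (1 * 1)" by (simp only: conjugate_dist_mul)
  hence "?c * ?c = ?c * 1" by simp
  moreover have "?c \<noteq> 0" by simp
  ultimately show ?thesis using mult_left_cancel by blast
qed

lemma conjugate_diff: "conjugate ((a::'a::conjugatable_ring) - b) = conjugate a - conjugate b"
  by (simp only: diff_conv_add_uminus conjugate_dist_add conjugate_neg)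

lemma adj_one[simp]: "adj (1\<^sub>m n :: 'a::conjugatable_field mat) = 1\<^sub>m n"
  by (rule eq_matI, auto)

lemma adj_minus: fixes A :: "'a::conjugatable_field mat"
  assumes "A \<in> carrier_mat m n" "B \<in> carrier_mat m n" shows "adj (A - B) = adj A - adj B"
  apply (rule eq_matI) using assms by (auto simp: conjugate_diff)

lemma proper: fixes M :: "'a::conjugatable_ordered_field mat"
  assumes "adj M * M = 0\<^sub>m (dim_col M) (dim_col M)" shows "M = 0\<^sub>m (dim_row M) (dim_col M)"
proof (rule eq_matI)
  fix i j assume "i < dim_row (0\<^sub>m (dim_row M) (dim_col M))" and "j < dim_col (0\<^sub>m (dim_row M) (dim_col M))"
  hence i: "i < dim_row M" and j: "j < dim_col M" by auto
  have "(adj M * M) $$ (j,j) = 0" using assms j by simp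
  moreover have "(adj M * M) $$ (j,j) = row (adj M) j \<bullet> col M j" using j by simp
  moreover have "row (adj M) j \<bullet> col M j = (\<Sum>k\<in>{0..<dim_row M}. conjugate (M $$ (k,j)) * M $$ (k,j))"
    unfolding scalar_prod_def using j by simp
  ultimately have s: "(\<Sum>k\<in>{0..<dim_row M}. conjugate (M $$ (k,j)) * M $$ (k,j)) = 0" by simp
  have nn: "\<And>k. 0 \<le> conjugate (M $$ (k,j)) * M $$ (k,j)"
    by (subst mult.commute, rule conjugate_square_positive)
  have "\<forall>k\<in>{0..<dim_row M}. conjugate (M $$ (k,j)) * M $$ (k,j) = 0"
    using sum_nonneg_eq_0_iff[of "{0..<dim_row M}" "\<lambda>k. conjugate (M $$ (k,j)) * M $$ (k,j)"] nn s by blast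
  hence "conjugate (M $$ (i,j)) * M $$ (i,j) = 0" using i by simp
  hence "M $$ (i,j) = 0" by simp
  thus "M $$ (i,j) = 0\<^sub>m (dim_row M) (dim_col M) $$ (i,j)" using i j by simp
next show "dim_row M = dim_row (0\<^sub>m (dim_row M) (dim_col M))" by simp
next show "dim_col M = dim_col (0\<^sub>m (dim_row M) (dim_col M))" by simp
qed


lemma massoc: fixes A :: "'a::semiring_0 mat"
  shows "dim_col A = dim_row B \<Longrightarrow> dim_col B = dim_row C \<Longrightarrow> A * B * C = A * (B * C)"
  by (rule assoc_mult_mat[of A "dim_row A" "dim_col A" B "dim_col B" C "dim_col C"], auto)

lemma ginv_exists: fixes A :: "'a::field mat" assumes A: "A \<in> carrier_mat nr nc"
  shows "\<exists>G \<in> carrier_mat nc nr. A * G * A = A"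
proof -
  obtain R B' where gj: "gauss_jordan A (0\<^sub>m nr 0) = (R, B')" by (cases "gauss_jordan A (0\<^sub>m nr 0)") auto
  from gauss_jordan_transform[OF A _ gj, of 0 undefined] obtain P where
    PU: "P \<in> Units (ring_mat TYPE('a) nr undefined)" and RP: "R = P * A" by auto
  from PU[unfolded Units_def ring_mat_def, simplified] obtain Q where
    P: "P \<in> carrier_mat nr nr" and Q: "Q \<in> carrier_mat nr nr" and QP: "Q * P = 1\<^sub>m nr" by auto
  have R: "R \<in> carrier_mat nr nc" using RP P A by auto
  have AQR: "A = Q * R"
  proof -
    have "Q * R = (Q * P) * A" unfolding RP using Q P A by (simp add: assoc_mult_mat)
    thus ?thesis using QP A by simp
  qed
  from gauss_jordan_row_echelon[OF A gj] obtain f where pf: "pivot_fun R f nc"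
    unfolding row_echelon_form_def using R by auto
  have dR: "dim_row R = nr" using R by auto
  note pD = pivot_funD[OF dR pf]
  define G' :: "'a mat" where "G' = mat nc nr (\<lambda>(j,i). if f i < nc \<and> j = f i then 1 else 0)"
  define D :: "'a mat" where "D = mat nr nr (\<lambda>(k,i). if f i < nc \<and> k = i then 1 else 0)"
  have G': "G' \<in> carrier_mat nc nr" unfolding G'_def by auto
  have RG: "R * G' = D"
  proof (rule eq_matI)
    fix k i assume "k < dim_row D" "i < dim_col D"
    hence k: "k < nr" and i: "i < nr" unfolding D_def by auto
    have "(R * G') $$ (k,i) = (\<Sum>j\<in>{0..<nc}. R $$ (k,j) * (if f i < nc \<and> j = f i then 1 else 0))"
      using k i R unfolding G'_def by (simp add: scalar_prod_def)
    also have "\<dots> = (if f i < nc then R $$ (k, f i) else 0)"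
    proof (cases "f i < nc")
      case True
      have "(\<Sum>j\<in>{0..<nc}. R $$ (k,j) * (if f i < nc \<and> j = f i then 1 else 0))
          = (\<Sum>j\<in>{0..<nc}. if j = f i then R $$ (k,j) else 0)" using True by (intro sum.cong) auto
      also have "\<dots> = R $$ (k, f i)" using True by simp
      finally show ?thesis using True by simp
    qed simp
    also have "\<dots> = D $$ (k,i)"
    proof (cases "f i < nc")
      case True
      thus ?thesis using pD(4)[OF i True] pD(5)[OF i True k] k i unfolding D_def by auto
    qed (insert k i, simp add: D_def)
    finally show "(R * G') $$ (k,i) = D $$ (k,i)" .
  qed (insert R, auto simp: D_def G'_def)
  have DR: "D * R = R"
  proof (rule eq_matI)
    fix k j assume "k < dim_row R" "j < dim_col R"
    hence k: "k < nr" and j: "j < nc" using R by auto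
    have "(D * R) $$ (k,j) = (\<Sum>i\<in>{0..<nr}. (if f i < nc \<and> k = i then 1 else 0) * R $$ (i,j))"
      using k j R unfolding D_def by (simp add: scalar_prod_def)
    also have "\<dots> = (\<Sum>i\<in>{0..<nr}. if i = k then (if f k < nc then R $$ (k,j) else 0) else 0)"
      by (intro sum.cong) auto
    also have "\<dots> = (if f k < nc then R $$ (k,j) else 0)" using k by simp
    also have "\<dots> = R $$ (k,j)"
    proof (cases "f k < nc")
      case False
      with pD(1)[OF k] have "f k = nc" by auto
      with pD(2)[OF k, of j] j show ?thesis by simp
    qed simp
    finally show "(D * R) $$ (k,j) = R $$ (k,j)" .
  qed (insert R, auto simp: D_def)
  have RGR: "R * G' * R = R" using RG DR by simp
  show ?thesis
  proof (intro bexI)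
    show "G' * P \<in> carrier_mat nc nr" using G' P by auto
    have "A * (G' * P) * A = A * G' * R" unfolding RP using A G' P by (simp add: massoc carrier_matD)
    also have "\<dots> = Q * (R * G' * R)" unfolding AQR using Q R G' by (simp add: massoc carrier_matD)
    also have "\<dots> = A" using RGR AQR by simp
    finally show "A * (G' * P) * A = A" .
  qed
qed


lemmas msimps = massoc carrier_matD adj_mult

lemma minus_zero_eq: fixes X :: "'a::ab_group_add mat"
  assumes "X \<in> carrier_mat m n" "Y \<in> carrier_mat m n" "X - Y = 0\<^sub>m m n" shows "X = Y"
proof (rule eq_matI)
  fix i j assume "i < dim_row Y" "j < dim_col Y"
  hence ij: "i < m" "j < n" using assms by auto
  have "(X - Y) $$ (i,j) = 0" using assms ij by simp
  hence "X $$ (i,j) - Y $$ (i,j) = 0" using assms(1,2) ij by simp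
  thus "X $$ (i,j) = Y $$ (i,j)" by simp
qed (insert assms, auto)

lemma herm_ginv: fixes H :: "'a::conjugatable_field mat"
  assumes H: "H \<in> carrier_mat k k" and hH: "adj H = H"
  shows "\<exists>G \<in> carrier_mat k k. adj G = G \<and> H * G * H = H"
proof -
  obtain G0 where G0: "G0 \<in> carrier_mat k k" and g: "H * G0 * H = H" using ginv_exists[OF H] by auto
  have g': "H * adj G0 * H = H"
  proof -
    have "adj (H * G0 * H) = H * adj G0 * H" using H G0 hH by (simp add: msimps)
    thus ?thesis using g hH by simp
  qed
  show ?thesis
  proof (intro bexI conjI)
    show "G0 * H * adj G0 \<in> carrier_mat k k" using G0 H by auto
    show "adj (G0 * H * adj G0) = G0 * H * adj G0" using H G0 hH by (simp add: msimps)
    have "H * (G0 * H * adj G0) * H = (H * G0 * H) * adj G0 * H" using H G0 by (simp add: msimps)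
    also have "\<dots> = H" using g g' by simp
    finally show "H * (G0 * H * adj G0) * H = H" .
  qed
qed

lemma key: fixes A :: "'a::conjugatable_ordered_field mat"
  assumes A: "A \<in> carrier_mat m n" and G: "G \<in> carrier_mat n n"
    and HGH: "adj A * A * G * (adj A * A) = adj A * A"
  shows "A * G * adj A * A = A"
proof -
  define H where "H = adj A * A"
  have H: "H \<in> carrier_mat n n" unfolding H_def using A by auto
  define E where "E = G * H - 1\<^sub>m n"
  have E: "E \<in> carrier_mat n n" unfolding E_def using G H by auto
  have HE: "H * E = 0\<^sub>m n n"
  proof -
    have "H * E = H * (G * H) - H * 1\<^sub>m n" unfolding E_def
      by (rule mult_minus_distrib_mat[OF H _ one_carrier_mat], insert G H, auto)
    also have "\<dots> = H - H"
    proof -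
      have "H * (G * H) = H" using HGH H G unfolding H_def by (simp add: msimps)
      moreover have "H * 1\<^sub>m n = H" using H by simp
      ultimately show ?thesis by simp
    qed
    also have "\<dots> = 0\<^sub>m n n" using H by simp
    finally show ?thesis .
  qed
  have "adj (A * E) * (A * E) = adj E * (H * E)" unfolding H_def using A E by (simp add: msimps)
  also have "\<dots> = 0\<^sub>m n n" using HE E by simp
  finally have "adj (A * E) * (A * E) = 0\<^sub>m (dim_col (A * E)) (dim_col (A * E))" using E by simp
  from proper[OF this] have AE: "A * E = 0\<^sub>m m n" using A E by simp
  have "A * E = A * (G * H) - A * 1\<^sub>m n" unfolding E_def
    by (rule mult_minus_distrib_mat[OF A _ one_carrier_mat], insert G H, auto)
  hence "A * (G * H) - A = 0\<^sub>m m n" using AE A by simp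
  hence "A * (G * H) = A" by (rule minus_zero_eq[rotated 2], insert A G H, auto)
  thus ?thesis unfolding H_def using A G by (simp add: msimps)
qed


lemma MP_exists: fixes A :: "'a::conjugatable_ordered_field mat"
  assumes A: "A \<in> carrier_mat m n"
  shows "\<exists>X. is_MP A X"
proof -
  have AA: "adj A \<in> carrier_mat n m" using A by auto
  have H: "adj A * A \<in> carrier_mat n n" and hH: "adj (adj A * A) = adj A * A" using A by (auto simp: msimps)
  obtain G where G: "G \<in> carrier_mat n n" and hG: "adj G = G" and gG: "adj A * A * G * (adj A * A) = adj A * A"
    using herm_ginv[OF H hH] by auto
  have H': "A * adj A \<in> carrier_mat m m" and hH': "adj (A * adj A) = A * adj A" using A by (auto simp: msimps)
  obtain F where F: "F \<in> carrier_mat m m" and hF: "adj F = F" and gF: "A * adj A * F * (A * adj A) = A * adj A"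
    using herm_ginv[OF H' hH'] by auto
  have a: "A * G * adj A * A = A" by (rule key[OF A G gG])
  have b: "adj A * F * A * adj A = adj A" using key[OF AA F] gF by simp
  have b': "A * adj A * F * A = A"
  proof -
    have "adj (adj A * F * A * adj A) = A * adj A * F * A" using A F hF by (simp add: msimps)
    thus ?thesis using b by simp
  qed
  have a1: "A * (G * (adj A * A)) = A" using a A G by (simp add: msimps)
  have at: "A * (G * (adj A * (A * Z))) = A * Z" if "dim_row Z = n" for Z
  proof -
    have "A * (G * (adj A * (A * Z))) = (A * G * adj A * A) * Z" using A G that by (simp add: msimps)
    thus ?thesis using a by simp
  qed
  have bt: "A * (adj A * (F * (A * Z))) = A * Z" if "dim_row Z = n" for Z
  proof -
    have "A * (adj A * (F * (A * Z))) = (A * adj A * F * A) * Z" using A F that by (simp add: msimps)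
    thus ?thesis using b' by simp
  qed
  define X where "X = adj A * F * A * G * adj A"
  have X: "X \<in> carrier_mat n m" unfolding X_def using A F G by auto
  have AX: "A * X = A * (G * adj A)" unfolding X_def using A F G by (simp add: msimps bt)
  have XA: "X * A = adj A * (F * A)" unfolding X_def using A F G by (simp add: msimps a1)
  show ?thesis unfolding is_MP_def
  proof (intro exI conjI)
    show "X \<in> carrier_mat (dim_col A) (dim_row A)" using X A by auto
    show "A * X * A = A" unfolding AX using A G by (simp add: msimps a1)
    show "X * A * X = X" unfolding XA using A F G by (simp add: msimps X_def bt)
    show "adj (A * X) = A * X" unfolding AX using A G hG by (simp add: msimps)
    show "adj (X * A) = X * A" unfolding XA using A F hF by (simp add: msimps)
  qed
qed

lemma MP_unique: fixes A :: "'a::conjugatable_field mat"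
  assumes "is_MP A X" "is_MP A Y" shows "X = Y"
proof -
  define m where "m = dim_row A"
  define n where "n = dim_col A"
  have A: "A \<in> carrier_mat m n" unfolding m_def n_def by auto
  from assms have X: "X \<in> carrier_mat n m" and Y: "Y \<in> carrier_mat n m"
    and x1: "A * X * A = A" and x2: "X * A * X = X" and x3: "adj (A * X) = A * X" and x4: "adj (X * A) = X * A"
    and y1: "A * Y * A = A" and y2: "Y * A * Y = Y" and y3: "adj (A * Y) = A * Y" and y4: "adj (Y * A) = Y * A"
    unfolding is_MP_def m_def n_def by auto
  have f1: "adj A = adj A * (A * Y)"
  proof -
    have "adj A = adj (A * Y * A)" using y1 by simp
    also have "\<dots> = adj A * adj (A * Y)" using A Y by (simp add: msimps)
    finally show ?thesis using y3 by simp
  qed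
  have f2: "adj A = X * A * adj A"
  proof -
    have "adj A = adj (A * X * A)" using x1 by simp
    also have "\<dots> = adj (X * A) * adj A" using A X by (simp add: msimps)
    finally show ?thesis using x4 by simp
  qed
  have gX: "X * (adj X * adj A) = X"
  proof -
    have "X * (adj X * adj A) = X * adj (A * X)" using A X by (simp add: msimps)
    also have "\<dots> = X * A * X" using x3 X A by (simp add: msimps)
    finally show ?thesis using x2 by simp
  qed
  have gY: "adj A * adj Y * Y = Y"
  proof -
    have "adj A * adj Y * Y = adj (Y * A) * Y" using A Y by (simp add: msimps)
    also have "\<dots> = Y * A * Y" using y4 by simp
    finally show ?thesis using y2 by simp
  qed
  have "X = X * (adj X * (adj A * (A * Y)))" using gX f1 A X Y by (simp add: msimps)
  also have "\<dots> = (X * (adj X * adj A)) * (A * Y)" using A X Y by (simp add: msimps)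
  also have "\<dots> = X * A * Y" using gX A X Y by (simp add: msimps)
  finally have eX: "X = X * A * Y" .
  have "Y = (X * A * adj A) * adj Y * Y" using gY f2 by simp
  also have "\<dots> = X * A * (adj A * adj Y * Y)" using A X Y by (simp add: msimps)
  also have "\<dots> = X * A * Y" using gY by simp
  finally show ?thesis using eX by simp
qed


lemma conjugate_if01[simp]: "conjugate (if b then 1 else 0 :: 'a::conjugatable_field) = (if b then 1 else 0)" by simp

lemma J_dim[simp]: "dim_row (J_mat n) = n" "dim_col (J_mat n) = n+1" unfolding J_mat_def by auto
lemma K_dim[simp]: "dim_row (K_mat n) = n" "dim_col (K_mat n) = n" unfolding K_mat_def by auto
lemma J_carrier[simp]: "J_mat n \<in> carrier_mat n (n+1)" unfolding J_mat_def by auto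
lemma K_carrier[simp]: "K_mat n \<in> carrier_mat n n" unfolding K_mat_def by auto

definition L_mat :: "nat \<Rightarrow> 'a::conjugatable_field mat" where
  "L_mat n = mat n (n + 1) (\<lambda>(i, j). if i = j then 1 else 0)"
lemma L_dim[simp]: "dim_row (L_mat n) = n" "dim_col (L_mat n) = n+1" unfolding L_mat_def by auto
lemma L_carrier[simp]: "L_mat n \<in> carrier_mat n (n+1)" unfolding L_mat_def by auto

lemma JL: "J_mat n * adj (L_mat n) = (1\<^sub>m n :: 'a::conjugatable_field mat)"
proof (rule eq_matI)
  fix i k assume "i < dim_row (1\<^sub>m n :: 'a mat)" "k < dim_col (1\<^sub>m n :: 'a mat)"
  hence i: "i < n" and k: "k < n" by auto
  have "(J_mat n * adj (L_mat n)) $$ (i,k) = (\<Sum>j\<in>{0..<n+1}. (J_mat n :: 'a mat) $$ (i,j) * (if k = j then 1 else 0))"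
    using i k by (simp add: scalar_prod_def L_mat_def)
  also have "\<dots> = (\<Sum>j\<in>{0..<n+1}. if j = k then (J_mat n :: 'a mat) $$ (i,k) else 0)"
    by (intro sum.cong) auto
  also have "\<dots> = (J_mat n :: 'a mat) $$ (i,k)" using k by simp
  also have "\<dots> = 1\<^sub>m n $$ (i,k)" using i k by (simp add: J_mat_def)
  finally show "(J_mat n * adj (L_mat n)) $$ (i,k) = (1\<^sub>m n :: 'a mat) $$ (i,k)" .
qed (auto simp: J_mat_def L_mat_def)

lemma LJ: "L_mat n * adj (J_mat n) = (1\<^sub>m n :: 'a::conjugatable_field mat)"
proof -
  have "adj (J_mat n * adj (L_mat n)) = L_mat n * adj (J_mat n :: 'a mat)" by (simp add: msimps)
  thus ?thesis using JL[where 'a='a] by simp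
qed

definition ones :: "nat \<Rightarrow> 'a::conjugatable_field mat" where "ones n = mat (n+1) 1 (\<lambda>_. 1)"
lemma ones_dim[simp]: "dim_row (ones n) = n+1" "dim_col (ones n) = 1" unfolding ones_def by auto
lemma ones_carrier[simp]: "ones n \<in> carrier_mat (n+1) 1" unfolding ones_def by auto

lemma J_ones: "J_mat n * ones n = (0\<^sub>m n 1 :: 'a::conjugatable_field mat)"
proof (rule eq_matI)
  fix i k assume "i < dim_row (0\<^sub>m n 1 :: 'a mat)" "k < dim_col (0\<^sub>m n 1 :: 'a mat)"
  hence i: "i < n" and k: "k = 0" by auto
  have "(J_mat n * ones n) $$ (i,k) = (\<Sum>j\<in>{0..<Suc n}. (if j < n then (if i = j then 1 else 0) else - 1 :: 'a))"
    using i k by (simp add: scalar_prod_def ones_def J_mat_def)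
  also have "\<dots> = (\<Sum>j\<in>{0..<n}. (if i = j then 1 else 0 :: 'a)) + (- 1)"
    by (simp add: sum.atLeast0_lessThan_Suc)
  also have "\<dots> = 0" using i by simp
  finally show "(J_mat n * ones n) $$ (i,k) = (0\<^sub>m n 1 :: 'a mat) $$ (i,k)" using i k by simp
qed (auto simp: J_mat_def ones_def)

lemma phi_carrier[simp]: "X \<in> carrier_mat n n \<Longrightarrow> phi n X \<in> carrier_mat (n+1) (n+1)"
  unfolding phi_def by auto

lemma phi_mult: fixes X :: "'a::conjugatable_field mat"
  assumes "X \<in> carrier_mat n n" "Y \<in> carrier_mat n n"
  shows "phi n X * phi n Y = phi n (X * K_mat n * Y)"
  unfolding phi_def K_mat_def using assms by (simp add: msimps)

lemma phi_adj: fixes X :: "'a::conjugatable_field mat"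
  assumes "X \<in> carrier_mat n n" shows "adj (phi n X) = phi n (adj X)"
  unfolding phi_def using assms by (simp add: msimps)

lemma phi_inj: fixes X :: "'a::conjugatable_field mat"
  assumes X: "X \<in> carrier_mat n n" and Y: "Y \<in> carrier_mat n n" and e: "phi n X = phi n Y"
  shows "X = Y"
proof -
  have r: "L_mat n * phi n Z * adj (L_mat n) = Z" if Z: "Z \<in> carrier_mat n n" for Z :: "'a mat"
  proof -
    have "L_mat n * phi n Z * adj (L_mat n) = (L_mat n * adj (J_mat n)) * Z * (J_mat n * adj (L_mat n))"
      unfolding phi_def using Z by (simp add: msimps)
    thus ?thesis using Z by (simp add: JL LJ)
  qed
  have "X = L_mat n * phi n X * adj (L_mat n)" using r[OF X] by simp
  also have "\<dots> = L_mat n * phi n Y * adj (L_mat n)" using e by simp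
  also have "\<dots> = Y" using r[OF Y] by simp
  finally show ?thesis .
qed

lemma phi_zero_sum: fixes X :: "'a::conjugatable_field mat"
  assumes X: "X \<in> carrier_mat n n" shows "phi n X \<in> zero_sum_mats (n+1)"
proof -
  have r: "phi n X * ones n = 0\<^sub>m (n+1) 1"
  proof -
    have "phi n X * ones n = adj (J_mat n) * X * (J_mat n * ones n)" unfolding phi_def using X by (simp add: msimps)
    thus ?thesis using X by (simp add: J_ones)
  qed
  have c: "adj (ones n) * phi n X = 0\<^sub>m 1 (n+1)"
  proof -
    have "adj (ones n) * phi n X = adj (J_mat n * ones n) * X * J_mat n" unfolding phi_def using X by (simp add: msimps)
    thus ?thesis using X by (simp add: J_ones)
  qed
  have pd[simp]: "dim_row (phi n X) = n+1" "dim_col (phi n X) = n+1" using phi_carrier[OF X] by auto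
  show ?thesis unfolding zero_sum_mats_def
  proof (intro CollectI conjI allI impI)
    show "phi n X \<in> carrier_mat (n+1) (n+1)" by (rule phi_carrier[OF X])
    fix i assume i: "i < n + 1"
    have "(phi n X * ones n) $$ (i,0) = 0" using r i by simp
    thus "(\<Sum>j<n+1. phi n X $$ (i, j)) = 0" using X i
      by (simp add: scalar_prod_def ones_def atLeast0LessThan)
  next
    fix j assume j: "j < n + 1"
    have "(adj (ones n) * phi n X) $$ (0,j) = 0" using c j by simp
    thus "(\<Sum>i<n+1. phi n X $$ (i, j)) = 0" using X j
      by (simp add: scalar_prod_def ones_def atLeast0LessThan)
  qed
qed



lemma part1: fixes X :: "'a::conjugatable_ordered_field mat"
  assumes X: "X \<in> carrier_mat n n" and Y: "Y \<in> carrier_mat n n"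
  shows "(circ_pinv n X Y \<longleftrightarrow> phi n Y \<in> zero_sum_mats (n + 1) \<and> is_pinv (phi n X) (phi n Y)) \<and>
       (circ_MP n X Y \<longleftrightarrow> is_MP (phi n X) (phi n Y))"
proof -
  have K: "K_mat n \<in> carrier_mat n n" by simp
  have XKY: "X * K_mat n * Y \<in> carrier_mat n n" using X Y by auto
  have YKX: "Y * K_mat n * X \<in> carrier_mat n n" using X Y by auto
  have p1: "phi n X * phi n Y * phi n X = phi n (X * K_mat n * Y * K_mat n * X)"
    using X Y XKY by (simp add: phi_mult)
  have p2: "phi n Y * phi n X * phi n Y = phi n (Y * K_mat n * X * K_mat n * Y)"
    using X Y YKX by (simp add: phi_mult)
  have p3: "adj (phi n X * phi n Y) = phi n (adj (X * K_mat n * Y))"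
    using X Y XKY by (simp add: phi_mult phi_adj)
  have p4: "adj (phi n Y * phi n X) = phi n (adj (Y * K_mat n * X))"
    using X Y YKX by (simp add: phi_mult phi_adj)
  have c1: "X * K_mat n * Y * K_mat n * X \<in> carrier_mat n n" using X Y by auto
  have c2: "Y * K_mat n * X * K_mat n * Y \<in> carrier_mat n n" using X Y by auto
  have i1: "(phi n X * phi n Y * phi n X = phi n X) \<longleftrightarrow> X * K_mat n * Y * K_mat n * X = X"
    unfolding p1 using phi_inj[OF c1 X] by auto
  have i2: "(phi n Y * phi n X * phi n Y = phi n Y) \<longleftrightarrow> Y * K_mat n * X * K_mat n * Y = Y"
    unfolding p2 using phi_inj[OF c2 Y] by auto
  have i3: "(adj (phi n X * phi n Y) = phi n X * phi n Y) \<longleftrightarrow> adj (X * K_mat n * Y) = X * K_mat n * Y"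
    unfolding phi_mult[OF X Y] phi_adj[OF XKY] using phi_inj[OF adj_carrier[OF XKY] XKY] by auto
  have i4: "(adj (phi n Y * phi n X) = phi n Y * phi n X) \<longleftrightarrow> adj (Y * K_mat n * X) = Y * K_mat n * X"
    unfolding phi_mult[OF Y X] phi_adj[OF YKX] using phi_inj[OF adj_carrier[OF YKX] YKX] by auto
  have cr: "phi n Y \<in> carrier_mat (dim_col (phi n X)) (dim_row (phi n X))"
    using phi_carrier[OF X] phi_carrier[OF Y] by auto
  show ?thesis
    unfolding circ_pinv_def circ_MP_def is_pinv_def is_MP_def twisted_prod_def
    using i1 i2 i3 i4 cr Y phi_zero_sum[OF Y] by auto
qed

lemma part2: fixes X :: "'a::conjugatable_ordered_field mat"
  assumes X: "X \<in> carrier_mat n n"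
  shows "MP_inverse (phi n X) \<in> zero_sum_mats (n + 1) \<and>
       MP_inverse (phi n X) = phi n (circ_MP_inverse n X)"
proof -
  let ?A = "phi n X"
  have A: "?A \<in> carrier_mat (n+1) (n+1)" by (rule phi_carrier[OF X])
  obtain B where B: "is_MP ?A B" using MP_exists[OF A] by auto
  have MPB: "MP_inverse ?A = B" unfolding MP_inverse_def
    by (rule the_equality[of "is_MP ?A" B], rule B, insert MP_unique[OF _ B], auto)
  from B A have Bc: "B \<in> carrier_mat (n+1) (n+1)" and b2: "B * ?A * B = B"
    and b3: "adj (?A * B) = ?A * B" and b4: "adj (B * ?A) = B * ?A" unfolding is_MP_def by auto
  let ?J = "J_mat n :: 'a mat" and ?L = "L_mat n :: 'a mat"
  have JX: "?J \<in> carrier_mat n (n+1)" "?L \<in> carrier_mat n (n+1)" by auto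
  have adjA: "adj ?A = adj ?J * adj X * ?J" using phi_adj[OF X] unfolding phi_def by simp
  have BZ: "B = adj ?J * (adj X * ?J * adj B * B)"
  proof -
    have "B = adj (B * ?A) * B" using b2 b4 by simp
    also have "\<dots> = adj ?A * adj B * B" using Bc A by (simp add: msimps)
    also have "\<dots> = adj ?J * (adj X * ?J * adj B * B)" unfolding adjA using Bc X by (simp add: msimps)
    finally show ?thesis .
  qed
  have BW: "B = (B * adj B * adj ?J * adj X) * ?J"
  proof -
    have "B = B * adj (?A * B)" using b2 b3 Bc A by (simp add: msimps)
    also have "\<dots> = B * adj B * adj ?A" using Bc A by (simp add: msimps)
    also have "\<dots> = (B * adj B * adj ?J * adj X) * ?J" unfolding adjA using Bc X by (simp add: msimps)
    finally show ?thesis .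
  qed
  define Z where "Z = adj X * ?J * adj B * B"
  define W where "W = B * adj B * adj ?J * adj X"
  have Zc: "Z \<in> carrier_mat n (n+1)" unfolding Z_def using X Bc by auto
  have Wc: "W \<in> carrier_mat (n+1) n" unfolding W_def using X Bc by auto
  have BZ': "B = adj ?J * Z" using BZ unfolding Z_def .
  have BW': "B = W * ?J" using BW unfolding W_def .
  have LB: "adj ?J * (?L * B) = B"
  proof -
    have "adj ?J * (?L * B) = adj ?J * ((?L * adj ?J) * Z)" using Zc by (subst BZ', simp add: msimps)
    also have "\<dots> = B" using Zc BZ' by (simp add: LJ)
    finally show ?thesis .
  qed
  have BL: "B * (adj ?L * ?J) = B"
  proof -
    have "B * (adj ?L * ?J) = W * (?J * adj ?L) * ?J" using Wc by (subst BW', simp add: msimps)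
    also have "\<dots> = B" using Wc BW' by (simp add: JL)
    finally show ?thesis .
  qed
  define Y where "Y = ?L * B * adj ?L"
  have Yc: "Y \<in> carrier_mat n n" unfolding Y_def using Bc by auto
  have phiY: "phi n Y = B"
  proof -
    have "phi n Y = (adj ?J * (?L * B)) * (adj ?L * ?J)" unfolding phi_def Y_def using Bc by (simp add: msimps)
    also have "\<dots> = B" using LB BL by simp
    finally show ?thesis .
  qed
  have cY: "circ_MP n X Y" using part1[OF X Yc] B phiY by simp
  have cMP: "circ_MP_inverse n X = Y" unfolding circ_MP_inverse_def
  proof (rule the_equality[of "circ_MP n X" Y], rule cY)
    fix Y' assume "circ_MP n X Y'"
    hence Y': "Y' \<in> carrier_mat n n" and "is_MP ?A (phi n Y')" using part1[OF X] unfolding circ_MP_def by auto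
    hence "phi n Y' = B" using MP_unique[OF _ B] by auto
    thus "Y' = Y" using phi_inj[OF Y' Yc] phiY by simp
  qed
  show ?thesis using MPB cMP phiY phi_zero_sum[OF Yc] by simp
qed


theorem theorem3:
  shows
  "(\<forall>n (X :: real mat) Y. X \<in> carrier_mat n n \<longrightarrow> Y \<in> carrier_mat n n \<longrightarrow>
       (circ_pinv n X Y \<longleftrightarrow> phi n Y \<in> zero_sum_mats (n + 1) \<and> is_pinv (phi n X) (phi n Y)) \<and>
       (circ_MP n X Y \<longleftrightarrow> is_MP (phi n X) (phi n Y))) \<and>
   (\<forall>n (X :: real mat). X \<in> carrier_mat n n \<longrightarrow>
       MP_inverse (phi n X) \<in> zero_sum_mats (n + 1) \<and>
       MP_inverse (phi n X) = phi n (circ_MP_inverse n X)) \<and>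
   (\<forall>n (X :: complex mat) Y. X \<in> carrier_mat n n \<longrightarrow> Y \<in> carrier_mat n n \<longrightarrow>
       (circ_pinv n X Y \<longleftrightarrow> phi n Y \<in> zero_sum_mats (n + 1) \<and> is_pinv (phi n X) (phi n Y)) \<and>
       (circ_MP n X Y \<longleftrightarrow> is_MP (phi n X) (phi n Y))) \<and>
   (\<forall>n (X :: complex mat). X \<in> carrier_mat n n \<longrightarrow>
       MP_inverse (phi n X) \<in> zero_sum_mats (n + 1) \<and>
       MP_inverse (phi n X) = phi n (circ_MP_inverse n X))"
    using part1[where 'a=real] part2[where 'a=real] part1[where 'a=complex] part2[where 'a=complex]
  by blast

end
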